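(* Let $G$ be a simple, undirected, connected graph on $N$ vertices with degree sequence $d_1\le d_2\le\cdots\le d_N$, and let $H=\sum_{1\le i<j\le N}\frac{d_j}{d_i}$. Then $$R^+(G)\ge N(N-3)+H+\left[\frac{N(N-1)}{2}\right]^2\frac{1}{H}.$$
   Context: For vertices $i,j$ of $G$, $R_{ij}$ denotes the effective resistance between $i$ and $j$ when every edge of $G$ is a unit resistor. The additive degree-Kirchhoff index is $R^+(G)=\sum_{i<j}(d_i+d_j)R_{ij}$, where $d_i$ is the degree of vertex $i$. *)

theory Defs
  imports Complex_Main
begin

text \<open>A simple undirected graph on the vertex set {0..<N} is given by an
  adjacency relation E that is symmetric and irreflexive (only its values on
  {0..<N} matter).\<close>

definition simple_graph :: "nat \<Rightarrow> (nat \<Rightarrow> nat \<Rightarrow> bool) \<Rightarrow> bool" where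
  "simple_graph N E \<longleftrightarrow> (\<forall>i<N. \<forall>j<N. E i j \<longleftrightarrow> E j i) \<and> (\<forall>i<N. \<not> E i i)"

definition edges_on :: "nat \<Rightarrow> (nat \<Rightarrow> nat \<Rightarrow> bool) \<Rightarrow> (nat \<times> nat) set" where
  "edges_on N E = {(a, b). a < N \<and> b < N \<and> E a b}"

definition connected_graph :: "nat \<Rightarrow> (nat \<Rightarrow> nat \<Rightarrow> bool) \<Rightarrow> bool" where
  "connected_graph N E \<longleftrightarrow> (\<forall>i<N. \<forall>j<N. (i, j) \<in> (edges_on N E)\<^sup>*)"

definition deg :: "nat \<Rightarrow> (nat \<Rightarrow> nat \<Rightarrow> bool) \<Rightarrow> nat \<Rightarrow> nat" where
  "deg N E i = card {j. j < N \<and> E i j}"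

definition laplacian_app :: "nat \<Rightarrow> (nat \<Rightarrow> nat \<Rightarrow> bool) \<Rightarrow> (nat \<Rightarrow> real) \<Rightarrow> nat \<Rightarrow> real" where
  "laplacian_app N E phi k = real (deg N E k) * phi k - (\<Sum>j\<in>{j. j < N \<and> E k j}. phi j)"

text \<open>Effective resistance between i and j (every edge a unit resistor):
  the potential difference phi i - phi j produced by injecting a unit current at i
  and extracting it at j, i.e. for a potential phi with L phi = e_i - e_j
  (Kirchhoff/Ohm). For a connected graph phi is unique up to an additive constant,
  so the potential difference is well defined.\<close>
definition eff_res :: "nat \<Rightarrow> (nat \<Rightarrow> nat \<Rightarrow> bool) \<Rightarrow> nat \<Rightarrow> nat \<Rightarrow> real" where
  "eff_res N E i j =
     (let phi = (SOME phi. \<forall>k<N. laplacian_app N E phi k =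
                    (if k = i then 1 else 0) - (if k = j then 1 else 0))
      in phi i - phi j)"

definition add_deg_kirchhoff :: "nat \<Rightarrow> (nat \<Rightarrow> nat \<Rightarrow> bool) \<Rightarrow> real" where
  "add_deg_kirchhoff N E =
     (\<Sum>i<N. \<Sum>j\<in>{i<..<N}. real (deg N E i + deg N E j) * eff_res N E i j)"

end

theory Submission
  imports Defs "Jordan_Normal_Form.Determinant"
begin

lemma solve_exists:
  fixes A :: "real mat"
  assumes A: "A \<in> carrier_mat n n" and d: "det A \<noteq> 0" and b: "b \<in> carrier_vec n"
  shows "\<exists>x. x \<in> carrier_vec n \<and> A *\<^sub>v x = b"
proof -
  have "A \<in> Units (ring_mat TYPE(real) n ())" by (rule det_non_zero_imp_unit[OF A d])
  then obtain B where B: "B \<in> carrier_mat n n" and AB: "A * B = 1\<^sub>m n"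
    unfolding Units_def by (auto simp: ring_mat_simps)
  have "A *\<^sub>v (B *\<^sub>v b) = (A * B) *\<^sub>v b" using A B b by simp
  also have "\<dots> = b" using AB b by simp
  finally show ?thesis using B b by (intro exI[of _ "B *\<^sub>v b"]) auto
qed

lemma nb_set: fixes N :: nat shows "{l. l < N \<and> E k l} = {l\<in>{..<N}. E k l}" by auto

lemma sum_nb: fixes N :: nat and f :: "nat \<Rightarrow> 'a::comm_monoid_add" shows "(\<Sum>l\<in>{l. l < N \<and> E k l}. f l) = (\<Sum>l<N. if E k l then f l else 0)"
proof -
  have "(\<Sum>l\<in>{l. l < N \<and> E k l}. f l) = sum f {l\<in>{..<N}. E k l}" by (simp only: nb_set)
  also have "\<dots> = (\<Sum>l<N. if E k l then f l else 0)" by (rule sum.inter_filter[OF finite_lessThan])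
  finally show ?thesis .
qed

lemma deg_sum: "real (deg N E k) = (\<Sum>l<N. if E k l then 1 else 0)"
proof -
  have "real (deg N E k) = (\<Sum>l\<in>{l. l < N \<and> E k l}. 1)" by (simp add: deg_def)
  then show ?thesis by (simp only: sum_nb)
qed

lemma lap_eq: "laplacian_app N E \<phi> k = (\<Sum>l<N. if E k l then \<phi> k - \<phi> l else 0)"
proof -
  have "laplacian_app N E \<phi> k = (\<Sum>l<N. if E k l then \<phi> k else 0) - (\<Sum>l<N. if E k l then \<phi> l else 0)"
    unfolding laplacian_app_def deg_sum sum_nb sum_distrib_right
    by (rule arg_cong2[where f="(-)"]; rule sum.cong; simp)
  also have "\<dots> = (\<Sum>l<N. if E k l then \<phi> k - \<phi> l else 0)"
    by (simp add: sum_subtractf[symmetric] if_distrib cong: if_cong)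
  finally show ?thesis .
qed

lemma sym_swap:
  assumes sg: "simple_graph N E"
  shows "(\<Sum>k<N. \<Sum>l<N. if E k l then f k l else 0) = (\<Sum>k<N. \<Sum>l<N. if E k l then f l k else (0::real))"
proof -
  have "(\<Sum>k<N. \<Sum>l<N. if E k l then f k l else 0) = (\<Sum>l<N. \<Sum>k<N. if E k l then f k l else 0)"
    by (rule sum.swap)
  also have "\<dots> = (\<Sum>k<N. \<Sum>l<N. if E k l then f l k else (0::real))"
    using sg unfolding simple_graph_def
    by (intro sum.cong refl) auto
  finally show ?thesis .
qed

lemma energy:
  assumes sg: "simple_graph N E"
  shows "(\<Sum>k<N. \<phi> k * laplacian_app N E \<phi> k) = (\<Sum>k<N. \<Sum>l<N. if E k l then (\<phi> k - \<phi> l)^2 else 0) / 2"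
proof -
  define S where "S = (\<Sum>k<N. \<Sum>l<N. if E k l then \<phi> k * (\<phi> k - \<phi> l) else 0)"
  have 1: "(\<Sum>k<N. \<phi> k * laplacian_app N E \<phi> k) = S"
    unfolding S_def lap_eq by (simp add: sum_distrib_left if_distrib cong: if_cong)
  have 2: "S = (\<Sum>k<N. \<Sum>l<N. if E k l then \<phi> l * (\<phi> l - \<phi> k) else 0)"
    unfolding S_def by (rule sym_swap[OF sg])
  have "S + S = (\<Sum>k<N. \<Sum>l<N. if E k l then (\<phi> k - \<phi> l)^2 else 0)"
    apply (subst (2) 2) unfolding S_def sum.distrib[symmetric]
    by (intro sum.cong refl) (auto simp: power2_eq_square algebra_simps)
  then show ?thesis using 1 by simp
qed

lemma lap_total:
  assumes sg: "simple_graph N E"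
  shows "(\<Sum>k<N. laplacian_app N E \<phi> k) = 0"
proof -
  define S where "S = (\<Sum>k<N. \<Sum>l<N. if E k l then \<phi> k - \<phi> l else 0)"
  have 2: "S = (\<Sum>k<N. \<Sum>l<N. if E k l then \<phi> l - \<phi> k else 0)"
    unfolding S_def by (rule sym_swap[OF sg])
  have "S + S = 0"
    apply (subst (2) 2) unfolding S_def sum.distrib[symmetric]
    by (auto intro!: sum.neutral)
  then show ?thesis unfolding lap_eq S_def by simp
qed

lemma const_on_conn:
  assumes sg: "simple_graph N E" and cn: "connected_graph N E"
    and z: "(\<Sum>k<N. \<Sum>l<N. if E k l then (\<psi> k - \<psi> l)^2 else 0) = (0::real)"
    and a: "a < N" and b: "b < N"
  shows "\<psi> a = \<psi> b"
proof -
  have edge: "\<psi> k = \<psi> l" if "k < N" "l < N" "E k l" for k l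
  proof -
    have "\<forall>k\<in>{..<N}. (\<Sum>l<N. if E k l then (\<psi> k - \<psi> l)^2 else 0) = 0"
      using z by (subst sum_nonneg_eq_0_iff[symmetric]) (auto intro!: sum_nonneg)
    then have "(\<Sum>l<N. if E k l then (\<psi> k - \<psi> l)^2 else 0) = 0" using that by auto
    then have "\<forall>l\<in>{..<N}. (if E k l then (\<psi> k - \<psi> l)^2 else 0) = 0"
      by (subst sum_nonneg_eq_0_iff[symmetric]) auto
    then have "(\<psi> k - \<psi> l)^2 = 0" using that by (metis lessThan_iff)
    then show ?thesis by simp
  qed
  have "(a, b) \<in> (edges_on N E)\<^sup>*" using cn a b unfolding connected_graph_def by auto
  then show ?thesis
  proof (induction rule: rtrancl_induct)
    case base then show ?case by simp
  next
    case (step y z) then show ?case using edge unfolding edges_on_def by auto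
  qed
qed

lemma exists_pot:
  fixes b :: "nat \<Rightarrow> real"
  assumes sg: "simple_graph N E" and cn: "connected_graph N E" and j: "j < N"
    and bs: "(\<Sum>k<N. b k) = 0"
  shows "\<exists>\<phi>. \<forall>k<N. laplacian_app N E \<phi> k = b k"
proof -
  define A :: "real mat" where "A = mat N N (\<lambda>(k,l). (if k = l then real (deg N E k) + (if k = j then 1 else 0) else 0) - (if E k l then 1 else 0))"
  have Ac: "A \<in> carrier_mat N N" unfolding A_def by simp
  have Av: "(A *\<^sub>v v) $ k = laplacian_app N E (\<lambda>l. v$l) k + (if k = j then v$k else 0)"
    if v: "v \<in> carrier_vec N" and k: "k < N" for v k
  proof -
    have "(A *\<^sub>v v) $ k = (\<Sum>l<N. ((if k = l then real (deg N E k) + (if k = j then 1 else 0) else 0) - (if E k l then 1 else 0)) * v $ l)"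
      using v k unfolding A_def by (simp add: scalar_prod_def atLeast0LessThan)
    also have "\<dots> = (\<Sum>l<N. (if k = l then (real (deg N E k) + (if k = j then 1 else 0)) * v $ l else 0)) - (\<Sum>l<N. if E k l then v $ l else 0)"
      unfolding sum_subtractf[symmetric] by (intro sum.cong refl) (auto simp: algebra_simps)
    also have "\<dots> = laplacian_app N E (\<lambda>l. v$l) k + (if k = j then v$k else 0)"
      using k unfolding laplacian_app_def sum_nb by (simp add: algebra_simps)
    finally show ?thesis .
  qed
  have dA: "det A \<noteq> 0"
  proof
    assume "det A = 0"
    then obtain v where v: "v \<in> carrier_vec N" "v \<noteq> 0\<^sub>v N" "A *\<^sub>v v = 0\<^sub>v N"
      using det_0_iff_vec_prod_zero_field[OF Ac] by auto
    define \<psi> where "\<psi> = (\<lambda>l. v $ l)"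
    have eq: "laplacian_app N E \<psi> k + (if k = j then \<psi> k else 0) = 0" if "k < N" for k
      using Av[OF v(1) that] v(3) that unfolding \<psi>_def by simp
    have "(\<Sum>k<N. \<psi> k * (laplacian_app N E \<psi> k + (if k = j then \<psi> k else 0))) = 0"
      using eq by simp
    moreover have "(\<Sum>k<N. \<psi> k * (laplacian_app N E \<psi> k + (if k = j then \<psi> k else 0))) = (\<Sum>k<N. \<psi> k * laplacian_app N E \<psi> k) + (\<Sum>k<N. if k = j then \<psi> k * \<psi> k else 0)"
      unfolding sum.distrib[symmetric] by (intro sum.cong) (auto simp: algebra_simps)
    ultimately have "(\<Sum>k<N. \<psi> k * laplacian_app N E \<psi> k) + (\<Sum>k<N. if k = j then \<psi> k * \<psi> k else 0) = 0"
      by simp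
    then have s0: "(\<Sum>k<N. \<Sum>l<N. if E k l then (\<psi> k - \<psi> l)^2 else 0) / 2 + \<psi> j * \<psi> j = 0"
      using j unfolding energy[OF sg] by simp
    have W0: "(\<Sum>k<N. \<Sum>l<N. if E k l then (\<psi> k - \<psi> l)^2 else 0) \<ge> 0"
      by (intro sum_nonneg) auto
    have "\<psi> j * \<psi> j \<ge> 0" by simp
    then have W: "(\<Sum>k<N. \<Sum>l<N. if E k l then (\<psi> k - \<psi> l)^2 else 0) = 0" and pj: "\<psi> j = 0"
      using s0 W0 by (auto simp: add_nonneg_eq_0_iff)
    have "v = 0\<^sub>v N"
    proof (rule eq_vecI)
      fix k assume "k < dim_vec (0\<^sub>v N)"
      then have k: "k < N" by simp
      show "v $ k = 0\<^sub>v N $ k" using const_on_conn[OF sg cn W k j] pj k unfolding \<psi>_def by simp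
    qed (use v in simp)
    with v(2) show False by simp
  qed
  obtain x where x: "x \<in> carrier_vec N" "A *\<^sub>v x = vec N b"
    using solve_exists[OF Ac dA, of "vec N b"] by auto
  define \<psi> where "\<psi> = (\<lambda>l. x $ l)"
  have eq: "laplacian_app N E \<psi> k + (if k = j then \<psi> k else 0) = b k" if "k < N" for k
    using Av[OF x(1) that] x(2) that unfolding \<psi>_def by simp
  have "(\<Sum>k<N. laplacian_app N E \<psi> k + (if k = j then \<psi> k else 0)) = 0"
    using eq bs by simp
  then have "\<psi> j = 0" using j lap_total[OF sg] by (simp add: sum.distrib)
  then have "\<forall>k<N. laplacian_app N E \<psi> k = b k" using eq by (metis add.right_neutral)
  then show ?thesis by blast
qed

lemma tangent:
  fixes y :: "nat \<Rightarrow> real"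
  assumes "finite A" "(\<Sum>l\<in>A. y l) = s"
  shows "(\<Sum>l\<in>A. (y l)^2) \<ge> 2*t*s - t^2 * real (card A)"
proof -
  have "0 \<le> (\<Sum>l\<in>A. (y l - t)^2)" by (intro sum_nonneg) auto
  also have "\<dots> = (\<Sum>l\<in>A. (y l)^2) - 2*t*(\<Sum>l\<in>A. y l) + t^2 * real (card A)"
    by (simp add: power2_diff sum.distrib sum_subtractf sum_distrib_left[symmetric] sum_distrib_right[symmetric] algebra_simps)
  finally show ?thesis using assms by simp
qed

lemma alg:
  fixes a b x Ui Uj :: real
  assumes a: "a \<ge> 0" and b: "b \<ge> 0" and main: "x \<ge> x^2 + Ui + Uj"
    and a0: "a = 0 \<Longrightarrow> x = 1" and b0: "b = 0 \<Longrightarrow> x = 1"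
    and ti: "\<And>t. Ui \<ge> 2*t*(1-x) - t^2*a" and tj: "\<And>t. Uj \<ge> 2*t*(1-x) - t^2*b"
  shows "x \<ge> (a+b)/((a+1)*(b+1))"
proof (cases "x \<ge> 1")
  case True
  have "(a+b)/((a+1)*(b+1)) \<le> 1" using a b by (subst divide_le_eq_1) (auto simp: algebra_simps mult_nonneg_nonneg add_pos_nonneg)
  then show ?thesis using True by linarith
next
  case False
  then have ap: "a > 0" and bp: "b > 0" using a0 b0 a b by force+
  have "2*((1-x)/a)*(1-x) - ((1-x)/a)^2*a = (1-x)^2/a" using ap by (simp add: field_simps power2_eq_square)
  then have ui: "Ui \<ge> (1-x)^2/a" using ti[of "(1-x)/a"] by linarith
  have "2*((1-x)/b)*(1-x) - ((1-x)/b)^2*b = (1-x)^2/b" using bp by (simp add: field_simps power2_eq_square)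
  then have uj: "Uj \<ge> (1-x)^2/b" using tj[of "(1-x)/b"] by linarith
  have "x*(1-x) \<ge> (1-x)^2/a + (1-x)^2/b" using main ui uj by (simp add: power2_eq_square algebra_simps)
  then have "x*(1-x) \<ge> (1-x)*((1-x)*(1/a+1/b))" by (simp add: power2_eq_square algebra_simps add_divide_distrib)
  then have "x \<ge> (1-x)*(1/a+1/b)" using False by (simp add: mult_le_cancel_left)
  then have "x*(a*b) \<ge> (1-x)*(a+b)" using ap bp by (simp add: field_simps)
  then have 1: "x*(a*b+a+b) \<ge> a+b" by (simp add: algebra_simps)
  have "(a+b)/((a+1)*(b+1)) \<le> (a+b)/(a*b+a+b)"
  proof (rule divide_left_mono)
    show "a*b+a+b \<le> (a+1)*(b+1)" by (simp add: algebra_simps)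
    show "0 \<le> a+b" using ap bp by simp
    have "0 < a*b+a+b" using ap bp by (simp add: add_pos_pos)
    moreover have "0 < (a+1)*(b+1)" using ap bp by simp
    ultimately show "0 < ((a+1)*(b+1))*(a*b+a+b)" by (simp only: mult_pos_pos)
  qed
  also have "\<dots> \<le> x"
  proof -
    have "0 < a*b+a+b" using ap bp by (simp add: add_pos_pos)
    then show ?thesis using 1 by (subst divide_le_eq) (auto simp: mult.commute)
  qed
  finally show ?thesis .
qed

lemma sum_two:
  fixes f :: "nat \<Rightarrow> real"
  assumes "finite A" "a \<in> A" "b \<in> A" "a \<noteq> b"
  shows "sum f A = f a + f b + sum f (A - {a} - {b})"
  using assms by (simp add: sum.remove[of A a] sum.remove[of "A - {a}" b])

lemma nb_fin: "finite {l. l < (N::nat) \<and> E k l}" by simp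

lemma res_bound:
  assumes sg: "simple_graph N E" and i: "i < N" and j: "j < N" and ij: "i \<noteq> j"
    and sol: "\<forall>k<N. laplacian_app N E \<phi> k = (if k = i then 1 else 0) - (if k = j then 1 else 0)"
  shows "deg N E i > 0 \<and> deg N E j > 0 \<and>
     \<phi> i - \<phi> j \<ge> 1/real (deg N E i) + 1/real (deg N E j)
        - (if E i j then 2/(real (deg N E i) * real (deg N E j)) else 0)"
proof -
  define x where "x = \<phi> i - \<phi> j"
  define g where "g = (\<lambda>k l. if E k l then (\<phi> k - \<phi> l)^2 else (0::real))"
  define T where "T = (\<lambda>a. \<Sum>l<N. g a l)"
  define nb where "nb = (\<lambda>a. {l. l < N \<and> E a l})"
  have sym: "E k l = E l k" if "k < N" "l < N" for k l using sg that unfolding simple_graph_def by blast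
  have irr: "\<not> E k k" if "k < N" for k using sg that unfolding simple_graph_def by blast
  have gnn: "g k l \<ge> 0" for k l unfolding g_def by auto
  have gsym: "g k l = g l k" if "k < N" "l < N" for k l
    using sym[OF that] unfolding g_def by (simp add: power2_commute)
  have gii: "g a a = 0" if "a < N" for a using irr[OF that] unfolding g_def by simp
  have en: "(\<Sum>k<N. T k) = 2*x"
  proof -
    have "(\<Sum>k<N. \<phi> k * laplacian_app N E \<phi> k) = (\<Sum>k<N. \<phi> k * ((if k = i then 1 else 0) - (if k = j then 1 else 0)))"
      using sol by (intro sum.cong) auto
    also have "\<dots> = (\<Sum>k<N. (if k = i then \<phi> k else 0) - (if k = j then \<phi> k else 0))"
      by (intro sum.cong) auto
    also have "\<dots> = \<phi> i - \<phi> j" using i j by (simp add: sum_subtractf)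
    finally show ?thesis using energy[OF sg, of \<phi>] unfolding T_def g_def x_def by simp
  qed
  have lower: "(\<Sum>k<N. T k) \<ge> 2*T i + 2*T j - 2*g i j"
  proof -
    define R where "R = {..<N} - {i} - {j}"
    have s1: "(\<Sum>k<N. T k) = T i + T j + (\<Sum>k\<in>R. T k)"
      unfolding R_def using i j ij by (intro sum_two) auto
    have s2: "T k \<ge> g k i + g k j" if "k \<in> R" for k
    proof -
      have "T k = g k i + g k j + (\<Sum>l\<in>R. g k l)"
        unfolding T_def R_def using i j ij by (intro sum_two) auto
      moreover have "(\<Sum>l\<in>R. g k l) \<ge> 0" by (intro sum_nonneg gnn)
      ultimately show ?thesis by linarith
    qed
    have s3: "(\<Sum>k\<in>R. g k a) = T a - g a b" if "a < N" "b < N" "a \<noteq> b" "R = {..<N} - {a} - {b}" for a b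
    proof -
      have "(\<Sum>k<N. g k a) = g a a + g b a + (\<Sum>k\<in>R. g k a)"
        unfolding that(4) using that by (intro sum_two) auto
      moreover have "(\<Sum>k<N. g k a) = T a" unfolding T_def using that(1) by (intro sum.cong refl) (auto simp: gsym)
      ultimately show ?thesis using gii[OF that(1)] gsym[OF that(1,2)] by simp
    qed
    have "(\<Sum>k\<in>R. T k) \<ge> (\<Sum>k\<in>R. g k i + g k j)" using s2 by (intro sum_mono) auto
    also have "(\<Sum>k\<in>R. g k i + g k j) = (T i - g i j) + (T j - g j i)"
    proof -
      have "R = {..<N} - {j} - {i}" unfolding R_def by auto
      then show ?thesis unfolding sum.distrib using s3[of i j] s3[of j i] i j ij R_def by simp
    qed
    finally show ?thesis using s1 gsym[OF i j] by simp
  qed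
  have Tnb: "T a = (\<Sum>l\<in>nb a. g a l)" for a unfolding T_def nb_def sum_nb g_def by (intro sum.cong) auto
  have fin: "finite (nb a)" for a unfolding nb_def by simp
  have Li: "(\<Sum>l\<in>nb i. \<phi> i - \<phi> l) = 1"
    using sol i ij unfolding nb_def sum_nb lap_eq[symmetric] by auto
  have Lj: "(\<Sum>l\<in>nb j. \<phi> l - \<phi> j) = 1"
  proof -
    have "(\<Sum>l\<in>nb j. \<phi> j - \<phi> l) = -1"
      using sol j ij unfolding nb_def sum_nb lap_eq[symmetric] by auto
    moreover have "(\<Sum>l\<in>nb j. \<phi> l - \<phi> j) = - (\<Sum>l\<in>nb j. \<phi> j - \<phi> l)"
      by (simp add: sum_negf[symmetric])
    ultimately show ?thesis by simp
  qed
  have Ti: "T i = (\<Sum>l\<in>nb i. (\<phi> i - \<phi> l)^2)" unfolding Tnb g_def nb_def by (intro sum.cong) auto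
  have Tj: "T j = (\<Sum>l\<in>nb j. (\<phi> l - \<phi> j)^2)" unfolding Tnb g_def nb_def by (intro sum.cong) (auto simp: power2_commute)
  have degnb: "deg N E a = card (nb a)" for a unfolding deg_def nb_def by simp
  have di: "deg N E i > 0"
  proof (rule ccontr)
    assume "\<not> ?thesis"
    then have "nb i = {}" using fin[of i] degnb[of i] by simp
    then show False using Li by simp
  qed
  have dj: "deg N E j > 0"
  proof (rule ccontr)
    assume "\<not> ?thesis"
    then have "nb j = {}" using fin[of j] degnb[of j] by simp
    then show False using Lj by simp
  qed
  define Di where "Di = real (deg N E i)"
  define Dj where "Dj = real (deg N E j)"
  have Dip: "Di > 0" and Djp: "Dj > 0" using di dj unfolding Di_def Dj_def by auto
  have main: "x \<ge> T i + T j - g i j" using en lower by linarith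
  have "x \<ge> 1/Di + 1/Dj - (if E i j then 2/(Di*Dj) else 0)"
  proof (cases "E i j")
    case False
    have a: "T i \<ge> 1/Di"
    proof -
      have "T i \<ge> 2*(1/Di)*1 - (1/Di)^2 * Di" unfolding Ti Di_def degnb by (rule tangent[OF fin Li])
      also have "2*(1/Di)*1 - (1/Di)^2 * Di = 1/Di" using Dip by (simp add: field_simps power2_eq_square)
      finally show ?thesis .
    qed
    have b: "T j \<ge> 1/Dj"
    proof -
      have "T j \<ge> 2*(1/Dj)*1 - (1/Dj)^2 * Dj" unfolding Tj Dj_def degnb by (rule tangent[OF fin Lj])
      also have "2*(1/Dj)*1 - (1/Dj)^2 * Dj = 1/Dj" using Djp by (simp add: field_simps power2_eq_square)
      finally show ?thesis .
    qed
    have "g i j = 0" using False unfolding g_def by simp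
    then show ?thesis using main a b False by simp
  next
    case True
    have Eji: "E j i" using sym[OF i j] True by simp
    have jin: "j \<in> nb i" and iin: "i \<in> nb j" using True Eji i j unfolding nb_def by auto
    define Ui where "Ui = (\<Sum>l\<in>nb i - {j}. (\<phi> i - \<phi> l)^2)"
    define Uj where "Uj = (\<Sum>l\<in>nb j - {i}. (\<phi> l - \<phi> j)^2)"
    have TiU: "T i = x^2 + Ui" unfolding Ti Ui_def x_def using sum.remove[OF fin jin] by simp
    have TjU: "T j = x^2 + Uj" unfolding Tj Uj_def x_def using sum.remove[OF fin iin] by simp
    have gij: "g i j = x^2" using True unfolding g_def x_def by simp
    have SUi: "(\<Sum>l\<in>nb i - {j}. \<phi> i - \<phi> l) = 1 - x"
      using Li sum.remove[OF fin jin, of "\<lambda>l. \<phi> i - \<phi> l"] unfolding x_def by simp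
    have SUj: "(\<Sum>l\<in>nb j - {i}. \<phi> l - \<phi> j) = 1 - x"
      using Lj sum.remove[OF fin iin, of "\<lambda>l. \<phi> l - \<phi> j"] unfolding x_def by simp
    have ci: "real (card (nb i - {j})) = Di - 1" using jin fin[of i] di unfolding Di_def degnb
      by (simp add: of_nat_diff)
    have cj: "real (card (nb j - {i})) = Dj - 1" using iin fin[of j] dj unfolding Dj_def degnb
      by (simp add: of_nat_diff)
    have finI: "finite (nb i - {j})" and finJ: "finite (nb j - {i})" using fin by auto
    have r: "x \<ge> ((Di-1)+(Dj-1))/(((Di-1)+1)*((Dj-1)+1))"
    proof (rule alg[where Ui=Ui and Uj=Uj])
      show "0 \<le> Di - 1" "0 \<le> Dj - 1" using di dj unfolding Di_def Dj_def by auto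
      show "x \<ge> x^2 + Ui + Uj" using main TiU TjU gij by simp
      show "x = 1" if "Di - 1 = 0"
      proof -
        have "card (nb i - {j}) = 0" using ci that by simp
        then have "nb i - {j} = {}" using finI by simp
        then have "(\<Sum>l\<in>nb i - {j}. \<phi> i - \<phi> l) = 0" by (simp only: sum.empty)
        then show ?thesis using SUi by simp
      qed
      show "x = 1" if "Dj - 1 = 0"
      proof -
        have "card (nb j - {i}) = 0" using cj that by simp
        then have "nb j - {i} = {}" using finJ by simp
        then have "(\<Sum>l\<in>nb j - {i}. \<phi> l - \<phi> j) = 0" by (simp only: sum.empty)
        then show ?thesis using SUj by simp
      qed
      show "Ui \<ge> 2*t*(1-x) - t^2*(Di-1)" for t
        unfolding Ui_def ci[symmetric] by (rule tangent[OF finI SUi])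
      show "Uj \<ge> 2*t*(1-x) - t^2*(Dj-1)" for t
        unfolding Uj_def cj[symmetric] by (rule tangent[OF finJ SUj])
    qed
    have "((Di-1)+(Dj-1))/(((Di-1)+1)*((Dj-1)+1)) = 1/Di + 1/Dj - 2/(Di*Dj)"
      using Dip Djp by (simp add: field_simps)
    then show ?thesis using r True by simp
  qed
  then show ?thesis using di dj unfolding x_def Di_def Dj_def by simp
qed

lemma pair_sum:
  fixes f :: "nat \<Rightarrow> nat \<Rightarrow> real"
  shows "(\<Sum>i<N. \<Sum>j\<in>{i<..<N}. f i j + f j i) = (\<Sum>i<N. \<Sum>j<N. f i j) - (\<Sum>i<N. f i i)"
proof (induction N)
  case 0 then show ?case by simp
next
  case (Suc N)
  have e: "{N<..<Suc N} = {}" by auto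
  have split: "{i<..<Suc N} = insert N {i<..<N}" if "i < N" for i using that by auto
  have "(\<Sum>i<Suc N. \<Sum>j\<in>{i<..<Suc N}. f i j + f j i) = (\<Sum>i<N. \<Sum>j\<in>{i<..<Suc N}. f i j + f j i)"
    by (simp add: sum.lessThan_Suc e)
  also have "\<dots> = (\<Sum>i<N. (f i N + f N i) + (\<Sum>j\<in>{i<..<N}. f i j + f j i))"
    by (intro sum.cong refl) (simp add: split)
  also have "\<dots> = (\<Sum>i<N. f i N) + (\<Sum>i<N. f N i) + (\<Sum>i<N. \<Sum>j\<in>{i<..<N}. f i j + f j i)"
    by (simp add: sum.distrib)
  also have "\<dots> = (\<Sum>i<Suc N. \<Sum>j<Suc N. f i j) - (\<Sum>i<Suc N. f i i)"
    unfolding Suc.IH by (simp add: sum.lessThan_Suc sum.distrib)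
  finally show ?case .
qed

lemma er_bound:
  assumes sg: "simple_graph N E" and cn: "connected_graph N E" and i: "i < N" and j: "j < N" and ij: "i \<noteq> j"
  shows "deg N E i > 0 \<and> deg N E j > 0 \<and>
     eff_res N E i j \<ge> 1/real (deg N E i) + 1/real (deg N E j)
        - (if E i j then 2/(real (deg N E i) * real (deg N E j)) else 0)"
proof -
  let ?P = "\<lambda>\<phi>. \<forall>k<N. laplacian_app N E \<phi> k = (if k = i then 1 else 0) - (if k = j then 1 else 0)"
  have "(\<Sum>k<N. (if k = i then 1 else 0) - (if k = j then 1 else (0::real))) = 0"
    using i j by (simp add: sum_subtractf)
  then have ex: "\<exists>\<phi>. ?P \<phi>" by (rule exists_pot[OF sg cn j])
  have "?P (SOME \<phi>. ?P \<phi>)" by (rule someI_ex[OF ex])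
  from res_bound[OF sg i j ij this] show ?thesis unfolding eff_res_def Let_def by simp
qed

lemma recip_tangent:
  fixes r t :: real assumes "r > 0" shows "1/r \<ge> 2*t - t^2*r"
proof -
  have "0 \<le> (1 - t*r)^2 / r" using assms by simp
  also have "(1 - t*r)^2 / r = 1/r - (2*t - t^2*r)" using assms by (simp add: field_simps power2_eq_square)
  finally show ?thesis by simp
qed

theorem theorem4:
  fixes N :: nat and E :: "nat \<Rightarrow> nat \<Rightarrow> bool"
  assumes "simple_graph N E"
    and "connected_graph N E"
    and "\<And>i j. i \<le> j \<Longrightarrow> j < N \<Longrightarrow> deg N E i \<le> deg N E j"
  shows "add_deg_kirchhoff N E \<ge>
           real N * (real N - 3)
         + (\<Sum>i<N. \<Sum>j\<in>{i<..<N}. real (deg N E j) / real (deg N E i))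
         + (real N * (real N - 1) / 2)^2
           / (\<Sum>i<N. \<Sum>j\<in>{i<..<N}. real (deg N E j) / real (deg N E i))"
proof (cases "N < 2")
  case True
  then have "N = 0 \<or> N = 1" by auto
  then show ?thesis
  proof
    assume "N = 0" then show ?thesis by (simp add: add_deg_kirchhoff_def)
  next
    assume N1: "N = 1"
    have "{0::nat<..<1} = {}" by auto
    then show ?thesis using N1 by (simp add: add_deg_kirchhoff_def)
  qed
next
  case False
  note sg = assms(1) and cn = assms(2)
  define D where "D = (\<lambda>k. real (deg N E k))"
  have sym: "E k l = E l k" if "k < N" "l < N" for k l using sg that unfolding simple_graph_def by blast
  have Dpos: "D k > 0" if k: "k < N" for k
  proof -
    define m where "m = (if k = 0 then 1 else (0::nat))"
    have "m < N" "k \<noteq> m" using False k unfolding m_def by auto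
    then show ?thesis using er_bound[OF sg cn k] unfolding D_def by auto
  qed
  define H where "H = (\<Sum>i<N. \<Sum>j\<in>{i<..<N}. D j / D i)"
  define H' where "H' = (\<Sum>i<N. \<Sum>j\<in>{i<..<N}. D i / D j)"
  define M where "M = (\<Sum>i<N. \<Sum>j\<in>{i<..<N}. (1::real))"
  define g where "g = (\<lambda>i j. if E i j then 2 / D j else (0::real))"
  have step1: "add_deg_kirchhoff N E \<ge> (\<Sum>i<N. \<Sum>j\<in>{i<..<N}. (D i + D j) * (1/D i + 1/D j - (if E i j then 2/(D i * D j) else 0)))"
    unfolding add_deg_kirchhoff_def
  proof (intro sum_mono)
    fix i j assume i: "i \<in> {..<N}" and j: "j \<in> {i<..<N}"
    then have "i < N" "j < N" "i \<noteq> j" by auto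
    from er_bound[OF sg cn this] have "eff_res N E i j \<ge> 1/D i + 1/D j - (if E i j then 2/(D i * D j) else 0)"
      unfolding D_def by simp
    moreover have "D i + D j \<ge> 0" unfolding D_def by simp
    ultimately show "(D i + D j) * (1/D i + 1/D j - (if E i j then 2/(D i * D j) else 0)) \<le> real (deg N E i + deg N E j) * eff_res N E i j"
      unfolding D_def by (simp add: mult_left_mono)
  qed
  have step2: "(\<Sum>i<N. \<Sum>j\<in>{i<..<N}. (D i + D j) * (1/D i + 1/D j - (if E i j then 2/(D i * D j) else 0)))
      = (\<Sum>i<N. \<Sum>j\<in>{i<..<N}. (1 + 1) + (D j / D i + D i / D j) - (g i j + g j i))"
  proof (intro sum.cong refl)
    fix i j assume i: "i \<in> {..<N}" and j: "j \<in> {i<..<N}"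
    then have ij: "i < N" "j < N" by auto
    have p: "D i > 0" "D j > 0" using Dpos ij by auto
    show "(D i + D j) * (1/D i + 1/D j - (if E i j then 2/(D i * D j) else 0)) = (1 + 1) + (D j / D i + D i / D j) - (g i j + g j i)"
      using p sym[OF ij] unfolding g_def by (auto simp: field_simps)
  qed
  have p1: "(\<Sum>i<N. \<Sum>j\<in>{i<..<N}. (1::real) + 1) = real N * real N - real N"
    using pair_sum[of "\<lambda>i j. 1" N] by simp
  have colsum: "(\<Sum>i<N. if E i j then 1 else 0) = D j" if "j < N" for j
    unfolding D_def deg_sum
  proof (intro sum.cong refl)
    fix i assume "i \<in> {..<N}"
    then have "E i j = E j i" using sym[of i j] that by simp
    then show "(if E i j then 1 else 0) = (if E j i then 1 else (0::real))" by simp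
  qed
  have p3: "(\<Sum>i<N. \<Sum>j\<in>{i<..<N}. g i j + g j i) = 2 * real N"
  proof -
    have gii: "(\<Sum>i<N. g i i) = 0" unfolding g_def using sg unfolding simple_graph_def by simp
    have "(\<Sum>i<N. \<Sum>j<N. g i j) = (\<Sum>j<N. \<Sum>i<N. g i j)" by (rule sum.swap)
    also have "\<dots> = (\<Sum>j<N. (2 / D j) * (\<Sum>i<N. if E i j then 1 else 0))"
      unfolding g_def sum_distrib_left by (intro sum.cong refl) auto
    also have "\<dots> = (\<Sum>j<N. (2::real))"
    proof (intro sum.cong refl)
      fix j assume "j \<in> {..<N}"
      then have "j < N" by simp
      then have "D j > 0" "(\<Sum>i<N. if E i j then 1 else 0) = D j" using Dpos colsum by auto
      then show "(2 / D j) * (\<Sum>i<N. if E i j then 1 else 0) = (2::real)" by simp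
    qed
    finally show ?thesis using pair_sum[of g N] gii by simp
  qed
  have p2: "(\<Sum>i<N. \<Sum>j\<in>{i<..<N}. D j / D i + D i / D j) = H + H'"
    unfolding H_def H'_def by (simp add: sum.distrib)
  have main: "add_deg_kirchhoff N E \<ge> real N * (real N - 3) + H + H'"
  proof -
    have "(\<Sum>i<N. \<Sum>j\<in>{i<..<N}. (1 + 1) + (D j / D i + D i / D j) - (g i j + g j i))
      = (\<Sum>i<N. \<Sum>j\<in>{i<..<N}. (1::real) + 1) + (\<Sum>i<N. \<Sum>j\<in>{i<..<N}. D j / D i + D i / D j) - (\<Sum>i<N. \<Sum>j\<in>{i<..<N}. g i j + g j i)"
      by (simp add: sum.distrib sum_subtractf)
    then show ?thesis using step1 step2 p1 p2 p3 by (simp add: algebra_simps)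
  qed
  have M2: "2 * M = real N * real N - real N"
  proof -
    have "(\<Sum>i<N. \<Sum>j\<in>{i<..<N}. (1::real) + 1) = 2*M" unfolding M_def by (simp only: sum.distrib mult_2)
    then show ?thesis using p1 by simp
  qed
  have Hnn: "H \<ge> 0" unfolding H_def using Dpos by (intro sum_nonneg) (auto intro!: divide_nonneg_nonneg less_imp_le)
  have H'nn: "H' \<ge> 0" unfolding H'_def using Dpos by (intro sum_nonneg) (auto intro!: divide_nonneg_nonneg less_imp_le)
  have HH: "H' \<ge> M^2 / H"
  proof (cases "H = 0")
    case True then show ?thesis using H'nn by simp
  next
    case False
    then have Hp: "H > 0" using Hnn by simp
    define t where "t = M / H"
    have "H' \<ge> (\<Sum>i<N. \<Sum>j\<in>{i<..<N}. 2*t*1 - t^2 * (D j / D i))"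
      unfolding H'_def
    proof (intro sum_mono)
      fix i j assume "i \<in> {..<N}" "j \<in> {i<..<N}"
      then have "D i > 0" "D j > 0" using Dpos by auto
      then have "1 / (D j / D i) \<ge> 2*t - t^2 * (D j / D i)" by (intro recip_tangent) simp
      then show "2*t*1 - t^2 * (D j / D i) \<le> D i / D j" by simp
    qed
    also have "(\<Sum>i<N. \<Sum>j\<in>{i<..<N}. 2*t*1 - t^2 * (D j / D i)) = 2*t*M - t^2 * H"
      unfolding M_def H_def by (simp only: sum_subtractf sum_distrib_left)
    also have "2*t*M - t^2 * H = M^2 / H" unfolding t_def using Hp by (simp add: field_simps power2_eq_square)
    finally show ?thesis .
  qed
  have Meq: "M = real N * (real N - 1) / 2" using M2 by (simp add: algebra_simps)
  have "(real N * (real N - 1) / 2)^2 / H \<le> H'" using HH unfolding Meq .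
  then show ?thesis using main unfolding H_def D_def by simp
qed

end
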